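(* In the setting described in the context, the empirical cost functions $f_t(\mathbf{L})$ are uniformly bounded and Lipschitz in $\mathbf{L}$.
   Context: Fix integers $p,r\ge 1$ and constants $\lambda_1,\lambda_2>0$. Let $\mathcal{G}$ be a finite collection of subsets of $\{1,\dots,p\}$. For $\mathbf{s}\in\mathbb{R}^p$ and $g\in\mathcal{G}$, let $\mathbf{s}_{|g}$ be the vector equal to $\mathbf{s}$ on indices in $g$ and zero elsewhere, and $\|\mathbf{s}\|_{\ell_1/\ell_\infty}=\sum_{g\in\mathcal{G}}\|\mathbf{s}_{|g}\|_\infty$. Define $\hat\ell(\mathbf{d},\mathbf{L},\mathbf{r},\mathbf{s})=\tfrac12\|\mathbf{d}-\mathbf{L}\mathbf{r}-\mathbf{s}\|_2^2+\tfrac{\lambda_1}{2}\|\mathbf{r}\|_2^2+\lambda_2\|\mathbf{s}\|_{\ell_1/\ell_\infty}$ and $\ell(\mathbf{d},\mathbf{L})=\min_{\mathbf{r},\mathbf{s}}\hat\ell(\mathbf{d},\mathbf{L},\mathbf{r},\mathbf{s})$. Data $\mathbf{d}_1,\mathbf{d}_2,\dots\in\mathbb{R}^p$ are independent and uniformly bounded (there is $M$ with $\|\mathbf{d}_t\|_2\le M$ for all $t$). The empirical cost function is $f_t(\mathbf{L})=\frac1t\sum_{i=1}^t\ell(\mathbf{d}_i,\mathbf{L})+\frac{\lambda_1}{2t}\|\mathbf{L}\|_F^2$, considered for $\mathbf{L}$ in a compact set $\mathcal{L}\subset\mathbb{R}^{p\times r}$ (the set containing the iterates of the online algorithm $\mathbf{L}_t=\mathbf{B}_t(\mathbf{A}_t+\lambda_1\mathbf{I})^{-1}$,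 $\mathbf{A}_t=\sum_{i\le t}\mathbf{r}_i\mathbf{r}_i^T$, $\mathbf{B}_t=\sum_{i\le t}(\mathbf{d}_i-\mathbf{s}_i)\mathbf{r}_i^T$, with $(\mathbf{r}_i,\mathbf{s}_i)$ a minimizer of $\hat\ell(\mathbf{d}_i,\mathbf{L}_{i-1},\cdot,\cdot)$). "Uniformly" means with constants independent of $t$. *)

theory Defs
  imports "HOL-Analysis.Analysis"
begin

text \<open>Vectors in R^p are \<open>real^'p\<close>, matrices in R^{p x r} are \<open>real^'r^'p\<close>
  (p rows, r columns); the Euclidean norm on \<open>real^'r^'p\<close> is the Frobenius norm.\<close>

definition restrict_grp :: "real^'p \<Rightarrow> 'p set \<Rightarrow> real^'p" where
  "restrict_grp s g = (\<chi> i. if i \<in> g then s $ i else 0)"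

definition linf_norm :: "real^'p \<Rightarrow> real" where
  "linf_norm v = Max (range (\<lambda>i. \<bar>v $ i\<bar>))"

definition l1linf_norm :: "'p set set \<Rightarrow> real^'p \<Rightarrow> real" where
  "l1linf_norm G s = (\<Sum>g\<in>G. linf_norm (restrict_grp s g))"

definition hat_loss ::
  "'p set set \<Rightarrow> real \<Rightarrow> real \<Rightarrow> real^'p \<Rightarrow> real^'r^'p \<Rightarrow> real^'r \<Rightarrow> real^'p \<Rightarrow> real" where
  "hat_loss G lam1 lam2 d L r s =
     (1/2) * (norm (d - L *v r - s))\<^sup>2 + (lam1/2) * (norm r)\<^sup>2 + lam2 * l1linf_norm G s"

definition loss ::
  "'p set set \<Rightarrow> real \<Rightarrow> real \<Rightarrow> real^'p \<Rightarrow> real^'r^'p \<Rightarrow> real" where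
  "loss G lam1 lam2 d L = (INF rs \<in> UNIV. hat_loss G lam1 lam2 d L (fst rs) (snd rs))"

definition emp_cost ::
  "'p set set \<Rightarrow> real \<Rightarrow> real \<Rightarrow> (nat \<Rightarrow> real^'p) \<Rightarrow> nat \<Rightarrow> real^'r^'p \<Rightarrow> real" where
  "emp_cost G lam1 lam2 d t L =
     (1 / real t) * (\<Sum>i=1..t. loss G lam1 lam2 (d i) L) + lam1 / (2 * real t) * (norm L)\<^sup>2"

end

theory Submission
  imports Defs
begin

lemma mv_bound:
  fixes A :: "real^'n::finite^'m::finite"
  shows "norm (A *v x) \<le> real CARD('m) * real CARD('n) * norm A * norm x"
proof -
  have bl: "bounded_linear ((*v) A)" by simp
  have "norm (A *v x) \<le> onorm ((*v) A) * norm x" by (rule onorm[OF bl])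
  also have "\<dots> \<le> (real CARD('m) * real CARD('n) * norm A) * norm x"
    apply (rule mult_right_mono[OF onorm_le_matrix_component])
     apply (rule order_trans[OF component_le_norm_cart Finite_Cartesian_Product.norm_nth_le])
    apply simp
    done
  finally show ?thesis by simp
qed

lemma linf_nonneg: "linf_norm (v::real^'p::finite) \<ge> 0"
proof -
  obtain i :: 'p where True by simp
  have "\<bar>v $ i\<bar> \<le> linf_norm v" unfolding linf_norm_def by (rule Max_ge) auto
  thus ?thesis by linarith
qed

lemma l1linf_nonneg: "l1linf_norm G (s::real^'p::finite) \<ge> 0"
  unfolding l1linf_norm_def by (rule sum_nonneg) (simp add: linf_nonneg)

lemma l1linf_zero: "l1linf_norm G (0::real^'p::finite) = 0"
proof -
  have "restrict_grp 0 g = (0::real^'p)" for g by (simp add: restrict_grp_def vec_eq_iff)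
  moreover have "linf_norm (0::real^'p) = 0" unfolding linf_norm_def by simp
  ultimately show ?thesis unfolding l1linf_norm_def by simp
qed

lemma hat_nonneg: "lam1 \<ge> 0 \<Longrightarrow> lam2 \<ge> 0 \<Longrightarrow> hat_loss G lam1 lam2 d L r (s::real^'p::finite) \<ge> 0"
  unfolding hat_loss_def using l1linf_nonneg[of G s] by simp

lemma loss_bdd: "lam1 \<ge> 0 \<Longrightarrow> lam2 \<ge> 0 \<Longrightarrow>
   bdd_below ((\<lambda>rs. hat_loss G lam1 lam2 (d::real^'p::finite) (L::real^'r::finite^'p) (fst rs) (snd rs)) ` UNIV)"
  by (rule bdd_belowI[where m=0]) (auto intro: hat_nonneg)

lemma loss_nonneg: "lam1 \<ge> 0 \<Longrightarrow> lam2 \<ge> 0 \<Longrightarrow> loss G lam1 lam2 (d::real^'p::finite) (L::real^'r::finite^'p) \<ge> 0"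
  unfolding loss_def by (rule cINF_greatest) (auto intro: hat_nonneg)

lemma loss_le_hat: "lam1 \<ge> 0 \<Longrightarrow> lam2 \<ge> 0 \<Longrightarrow> loss G lam1 lam2 (d::real^'p::finite) (L::real^'r::finite^'p) \<le> hat_loss G lam1 lam2 d L r s"
  unfolding loss_def using cINF_lower[OF loss_bdd, of lam1 lam2 "(r,s)"] by auto

lemma loss_upper: "lam1 \<ge> 0 \<Longrightarrow> lam2 \<ge> 0 \<Longrightarrow> loss G lam1 lam2 (d::real^'p::finite) (L::real^'r::finite^'p) \<le> (1/2) * (norm d)\<^sup>2"
  using loss_le_hat[of lam1 lam2 G d L 0 0] by (simp add: hat_loss_def l1linf_zero)


lemma loss_lip:
  fixes d :: "real^'p::finite" and L L' :: "real^'r::finite^'p"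
  assumes l1: "lam1 > 0" and l2: "lam2 \<ge> 0" and dM: "norm d \<le> M"
    and LB: "norm L \<le> B" and LB': "norm L' \<le> B"
  defines "H \<equiv> M\<^sup>2/2 + 1"
  defines "R \<equiv> sqrt (2*H/lam1)"
  defines "A \<equiv> sqrt (2*H)"
  defines "c \<equiv> real CARD('p) * real CARD('r)"
  shows "loss G lam1 lam2 d L' \<le> loss G lam1 lam2 d L + (c*R*(A + c*B*R)) * norm (L - L')"
proof -
  have cpos: "c \<ge> 0" unfolding c_def by simp
  have Hpos: "H > 0" unfolding H_def using zero_le_power2[of M] by linarith
  have up': "loss G lam1 lam2 d L' \<le> M\<^sup>2/2"
    using loss_upper[of lam1 lam2 G d L'] l1 l2 power_mono[OF dM norm_ge_zero, of 2] by simp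
  have Rnn: "R \<ge> 0" unfolding R_def using Hpos l1 by simp
  have Bnn: "B \<ge> 0" using LB norm_ge_zero order_trans by blast
  have key: "loss G lam1 lam2 d L' - (c*R*(A + c*B*R)) * norm (L - L') \<le> hat_loss G lam1 lam2 d L r s" for r s
  proof (cases "hat_loss G lam1 lam2 d L r s \<le> H")
    case False
    have "(c*R*(A + c*B*R)) * norm (L - L') \<ge> 0"
      using cpos Bnn unfolding R_def A_def by (simp add: Hpos l1 less_imp_le)
    then show ?thesis using False up' unfolding H_def by linarith
  next
    case True
    define a where "a = d - L *v r - s"
    define b where "b = d - L' *v r - s"
    have hl: "hat_loss G lam1 lam2 d L r s = (1/2) * (norm a)\<^sup>2 + (lam1/2) * (norm r)\<^sup>2 + lam2 * l1linf_norm G s"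
      unfolding a_def hat_loss_def by simp
    have hl': "hat_loss G lam1 lam2 d L' r s = (1/2) * (norm b)\<^sup>2 + (lam1/2) * (norm r)\<^sup>2 + lam2 * l1linf_norm G s"
      unfolding b_def hat_loss_def by simp
    have lnn: "lam2 * l1linf_norm G s \<ge> 0" using l2 l1linf_nonneg[of G s] by simp
    have rnn: "lam1/2 * (norm r)\<^sup>2 \<ge> 0" using l1 by simp
    have "(norm a)\<^sup>2 \<le> 2*H" using True hl lnn rnn by linarith
    hence na: "norm a \<le> A" unfolding A_def by (simp add: real_le_rsqrt)
    have "lam1 * (norm r)\<^sup>2 \<le> 2*H" using True hl lnn zero_le_power2[of "norm a"] by linarith
    hence "(norm r)\<^sup>2 \<le> 2*H/lam1" using l1 by (simp add: le_divide_eq mult.commute)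
    hence nr: "norm r \<le> R" unfolding R_def by (simp add: real_le_rsqrt)
    have ba: "b - a = (L - L') *v r" unfolding a_def b_def by (simp add: matrix_vector_mult_diff_rdistrib)
    have nLL: "norm (L - L') \<le> 2*B" using norm_triangle_ineq4[of L L'] LB LB' by linarith
    have nd: "norm (b - a) \<le> c * norm (L - L') * R"
    proof -
      have "norm (b - a) \<le> c * norm (L - L') * norm r" unfolding ba c_def by (rule mv_bound)
      also have "\<dots> \<le> c * norm (L - L') * R" using nr cpos by (simp add: mult_left_mono)
      finally show ?thesis .
    qed
    have nb: "norm b \<le> norm a + norm (b - a)" by (metis add.commute diff_add_cancel norm_triangle_ineq)
    have "(norm b)\<^sup>2 - (norm a)\<^sup>2 = (norm b - norm a) * (norm b + norm a)" by (simp add: power2_eq_square algebra_simps)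
    also have "\<dots> \<le> norm (b - a) * (2 * norm a + norm (b - a))"
    proof (cases "norm b \<ge> norm a")
      case True
      then show ?thesis using nb by (intro mult_mono) auto
    next
      case False
      then have "(norm b - norm a) * (norm b + norm a) \<le> 0" by (intro mult_nonpos_nonneg) auto
      also have "0 \<le> norm (b - a) * (2 * norm a + norm (b - a))" by simp
      finally show ?thesis .
    qed
    also have "\<dots> \<le> (c * norm (L - L') * R) * (2 * A + c * (2*B) * R)"
    proof (rule mult_mono)
      have "c * norm (L - L') * R \<le> c * (2*B) * R"
        using nLL cpos Rnn by (intro mult_right_mono mult_left_mono) auto
      then show "2 * norm a + norm (b - a) \<le> 2 * A + c * (2*B) * R" using na nd by linarith
    qed (use nd cpos Rnn in auto)
    finally have "(1/2)*(norm b)\<^sup>2 \<le> (1/2)*(norm a)\<^sup>2 + (c*R*(A + c*B*R)) * norm (L - L')"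
      by (simp add: algebra_simps)
    hence "hat_loss G lam1 lam2 d L' r s \<le> hat_loss G lam1 lam2 d L r s + (c*R*(A + c*B*R)) * norm (L - L')"
      using hl hl' by linarith
    moreover have "loss G lam1 lam2 d L' \<le> hat_loss G lam1 lam2 d L' r s"
      by (rule loss_le_hat) (use l1 l2 in auto)
    ultimately show ?thesis by linarith
  qed
  have "loss G lam1 lam2 d L' - (c*R*(A + c*B*R)) * norm (L - L') \<le> loss G lam1 lam2 d L"
    unfolding loss_def[of G lam1 lam2 d L] by (rule cINF_greatest) (use key in auto)
  thus ?thesis by linarith
qed


lemma sum_bounds:
  fixes S1 S2 :: real and T n K0 B lam1 :: real
  assumes "T \<ge> 1" "\<bar>S1 - S2\<bar> \<le> T * (K0 * n)" "\<bar>x1\<^sup>2 - x2\<^sup>2\<bar> \<le> 2*B*n" "lam1 > 0" "n \<ge> 0"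
  shows "\<bar>((1/T) * S1 + lam1/(2*T) * x1\<^sup>2) - ((1/T) * S2 + lam1/(2*T) * x2\<^sup>2)\<bar> \<le> (K0 + lam1*B) * n"
proof -
  have Tp: "T > 0" using assms by simp
  have e: "((1/T) * S1 + lam1/(2*T) * x1\<^sup>2) - ((1/T) * S2 + lam1/(2*T) * x2\<^sup>2)
     = (1/T) * (S1 - S2) + (lam1/2) * ((1/T) * (x1\<^sup>2 - x2\<^sup>2))" using Tp by (simp add: field_simps)
  have "\<bar>(1/T) * (S1 - S2)\<bar> = \<bar>S1 - S2\<bar> / T" using Tp by (simp add: abs_mult)
  also have "\<dots> \<le> (T * (K0 * n)) / T" by (rule divide_right_mono) (use assms Tp in auto)
  also have "\<dots> = K0 * n" using Tp by simp
  finally have a1: "\<bar>(1/T) * (S1 - S2)\<bar> \<le> K0 * n" .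
  have "\<bar>(1/T) * (x1\<^sup>2 - x2\<^sup>2)\<bar> = \<bar>x1\<^sup>2 - x2\<^sup>2\<bar> / T" using Tp by (simp add: abs_mult)
  also have "\<dots> \<le> \<bar>x1\<^sup>2 - x2\<^sup>2\<bar> / 1" by (rule divide_left_mono) (use assms Tp in auto)
  finally have "\<bar>(1/T) * (x1\<^sup>2 - x2\<^sup>2)\<bar> \<le> \<bar>x1\<^sup>2 - x2\<^sup>2\<bar>" by simp
  hence y: "\<bar>(1/T) * (x1\<^sup>2 - x2\<^sup>2)\<bar> \<le> 2*B*n" using assms(3) by linarith
  have "\<bar>(lam1/2) * ((1/T) * (x1\<^sup>2 - x2\<^sup>2))\<bar> = (lam1/2) * \<bar>(1/T) * (x1\<^sup>2 - x2\<^sup>2)\<bar>"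
    using assms(4) by (simp only: abs_mult)
  also have "\<dots> \<le> (lam1/2) * (2*B*n)" by (rule mult_left_mono[OF y]) (use assms(4) in simp)
  finally have a2: "\<bar>(lam1/2) * ((1/T) * (x1\<^sup>2 - x2\<^sup>2))\<bar> \<le> (lam1/2) * (2*B*n)" .
  have f1: "(lam1/2)*(2*B*n) = lam1*B*n" by simp
  have f2: "(K0 + lam1*B)*n = K0*n + lam1*B*n" by (simp add: distrib_right)
  show ?thesis unfolding e f2
    using a1 a2 f1 abs_triangle_ineq[of "(1/T) * (S1 - S2)" "(lam1/2) * ((1/T) * (x1\<^sup>2 - x2\<^sup>2))"]
    by linarith
qed

theorem proposition4:
  fixes G :: "'p::finite set set" and lam1 lam2 M :: real
    and d :: "nat \<Rightarrow> real^'p" and \<L> :: "(real^'r::finite^'p) set"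
  assumes "lam1 > 0" and "lam2 > 0"
    and "\<And>t. norm (d t) \<le> M"
    and "compact \<L>"
  shows "\<exists>C K. \<forall>t\<ge>1. \<forall>L\<in>\<L>. \<forall>L'\<in>\<L>.
           \<bar>emp_cost G lam1 lam2 d t L\<bar> \<le> C \<and>
           \<bar>emp_cost G lam1 lam2 d t L - emp_cost G lam1 lam2 d t L'\<bar> \<le> K * norm (L - L')"
proof -
  note l1 = assms(1) and l2 = less_imp_le[OF assms(2)] and dM = assms(3)
  have "bounded \<L>" by (rule compact_imp_bounded[OF assms(4)])
  then obtain B where Bp: "B > 0" and B0: "\<forall>x\<in>\<L>. norm x \<le> B"
    by (auto simp add: bounded_pos)
  have B: "norm L \<le> B" if "L \<in> \<L>" for L using B0 that by simp
  define K0 where "K0 = real CARD('p) * real CARD('r) * sqrt (2*(M\<^sup>2/2 + 1)/lam1) *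
     (sqrt (2*(M\<^sup>2/2 + 1)) + real CARD('p) * real CARD('r) * B * sqrt (2*(M\<^sup>2/2 + 1)/lam1))"
  have lip: "loss G lam1 lam2 (d i) L' \<le> loss G lam1 lam2 (d i) L + K0 * norm (L - L')"
    if "L \<in> \<L>" "L' \<in> \<L>" for i L L'
    using loss_lip[OF l1 l2 dM[of i] B[OF that(1)] B[OF that(2)], of G] unfolding K0_def .
  have lup: "loss G lam1 lam2 (d i) L \<le> M\<^sup>2/2" for i L
    using loss_upper[of lam1 lam2 G "d i" L] l1 l2 power_mono[OF dM[of i] norm_ge_zero, of 2] by simp
  have lnn: "loss G lam1 lam2 (d i) L \<ge> 0" for i L
    using loss_nonneg[of lam1 lam2 G "d i" L] l1 l2 by simp
  show ?thesis
  proof (intro exI allI impI ballI conjI)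
    fix t :: nat and L L' assume t: "t \<ge> 1" and L: "L \<in> \<L>" and L': "L' \<in> \<L>"
    have T: "real t \<ge> 1" using t by simp
    define S where "S X = (\<Sum>i=1..t. loss G lam1 lam2 (d i) X)" for X :: "real^'r^'p"
    have ec: "emp_cost G lam1 lam2 d t X = (1 / real t) * S X + lam1 / (2 * real t) * (norm X)\<^sup>2" for X :: "real^'r^'p"
      unfolding emp_cost_def S_def by simp
    have S0: "S L \<ge> 0" unfolding S_def by (rule sum_nonneg) (use lnn in auto)
    have S1: "S L \<le> real t * (M\<^sup>2/2)"
    proof -
      have "S L \<le> (\<Sum>i=1..t. M\<^sup>2/2)" unfolding S_def by (rule sum_mono) (rule lup)
      then show ?thesis by simp
    qed
    have nL: "(norm L)\<^sup>2 \<le> B\<^sup>2" using B[OF L] by (simp add: power_mono)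
    have "(1 / real t) * S L \<le> (1 / real t) * (real t * (M\<^sup>2/2))"
      by (rule mult_left_mono[OF S1]) simp
    also have "\<dots> = M\<^sup>2/2" using T by simp
    finally have "(1 / real t) * S L \<le> M\<^sup>2/2" .
    moreover have "lam1 / (2 * real t) * (norm L)\<^sup>2 \<le> lam1/2 * B\<^sup>2"
    proof -
      have "lam1 / (2 * real t) \<le> lam1/(2*1)" by (rule divide_left_mono) (use T l1 in auto)
      then show ?thesis using nL l1 by (intro mult_mono) auto
    qed
    moreover have "(1 / real t) * S L \<ge> 0" using S0 by simp
    moreover have "lam1 / (2 * real t) * (norm L)\<^sup>2 \<ge> 0" using l1 by simp
    ultimately show "\<bar>emp_cost G lam1 lam2 d t L\<bar> \<le> M\<^sup>2/2 + lam1/2 * B\<^sup>2"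
      unfolding ec by linarith
    have d1: "S L' - S L \<le> real t * (K0 * norm (L - L'))"
    proof -
      have "S L' \<le> (\<Sum>i=1..t. loss G lam1 lam2 (d i) L + K0 * norm (L - L'))"
        unfolding S_def by (rule sum_mono) (rule lip[OF L L'])
      then show ?thesis unfolding S_def by (simp add: sum.distrib)
    qed
    have d2: "S L - S L' \<le> real t * (K0 * norm (L - L'))"
    proof -
      have "S L \<le> (\<Sum>i=1..t. loss G lam1 lam2 (d i) L' + K0 * norm (L' - L))"
        unfolding S_def by (rule sum_mono) (rule lip[OF L' L])
      then show ?thesis unfolding S_def by (simp add: sum.distrib norm_minus_commute)
    qed
    have sq: "\<bar>(norm L)\<^sup>2 - (norm L')\<^sup>2\<bar> \<le> 2*B*norm (L - L')"
    proof -
      have "(norm L)\<^sup>2 - (norm L')\<^sup>2 = (norm L - norm L') * (norm L + norm L')"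
        by (simp add: power2_eq_square algebra_simps)
      hence "\<bar>(norm L)\<^sup>2 - (norm L')\<^sup>2\<bar> = \<bar>norm L - norm L'\<bar> * \<bar>norm L + norm L'\<bar>"
        by (simp only: abs_mult)
      also have "\<bar>norm L + norm L'\<bar> = norm L + norm L'" by simp
      finally have "\<bar>(norm L)\<^sup>2 - (norm L')\<^sup>2\<bar> = \<bar>norm L - norm L'\<bar> * (norm L + norm L')" .
      also have "\<dots> \<le> norm (L - L') * (2*B)"
        using B[OF L] B[OF L'] norm_triangle_ineq3[of L L'] by (intro mult_mono) auto
      finally show ?thesis by (metis mult.commute)
    qed
    show "\<bar>emp_cost G lam1 lam2 d t L - emp_cost G lam1 lam2 d t L'\<bar> \<le> (K0 + lam1*B) * norm (L - L')"
      unfolding ec by (rule sum_bounds[OF T _ sq l1 norm_ge_zero]) (unfold abs_le_iff, use d1 d2 in linarith)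
  qed
qed

end
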